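(* Let $n\ge 1$, $A\in\mathbb{R}^{n\times n}$ and $C\in\mathbb{R}^{1\times n}$. Assume that $(A,C)$ is an observable pair, that all eigenvalues of $A$ are nonzero, that all eigenvalues of $A$ are real, and that $(A^2,C)$ is an observable pair. Then for any $2n-1$ distinct nonnegative integers $t_1,\ldots,t_{2n-1}$, the matrix whose rows are $CA^{t_1},CA^{t_2},\ldots,CA^{t_{2n-1}}$ has rank $n$.
   Context: The setting is a linear time-invariant discrete-time single-output system $x(t+1)=Ax(t)+Bu(t)$, $y(t)=Cx(t)+Du(t)$, whose output is measured only at selected time instances $t_1,\ldots,t_l\in\{0,1,2,\ldots\}$. The system is called sample-based observable for these instances if the sample-based observability matrix, i.e. the $l\times n$ matrix with rows $CA^{t_1},\ldots,CA^{t_l}$, has rank $n$. A pair $(M,C)$ with $M\in\mathbb{R}^{n\times n}$ is observable if the matrix with rows $C,CM,\ldots,CM^{n-1}$ has rank $n$. *)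

theory Defs
  imports "Jordan_Normal_Form.DL_Rank" "Jordan_Normal_Form.Char_Poly"
begin

definition sample_obs_mat :: "real mat \<Rightarrow> real mat \<Rightarrow> nat \<Rightarrow> (nat \<Rightarrow> nat) \<Rightarrow> real mat" where
  "sample_obs_mat A C l t = mat_of_rows (dim_col A) [row (C * (A ^\<^sub>m t i)) 0. i \<leftarrow> [0..<l]]"

definition mat_rank :: "real mat \<Rightarrow> nat" where
  "mat_rank M = vec_space.rank (dim_row M) M"

definition observable_pair :: "real mat \<Rightarrow> real mat \<Rightarrow> bool" where
  "observable_pair M C \<longleftrightarrow> mat_rank (sample_obs_mat M C (dim_row M) (\<lambda>k. k)) = dim_row M"

end

theory Submission
  imports Defs "Jordan_Normal_Form.Schur_Decomposition"
begin

fun recs :: "real list \<Rightarrow> (nat \<Rightarrow> real) \<Rightarrow> bool" where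
  "recs [] g = (\<forall>s. g s = 0)"
| "recs (m # ms) g = recs ms (\<lambda>s. g (Suc s) - m * g s)"

definition altp :: "(nat \<Rightarrow> real) \<Rightarrow> nat \<Rightarrow> (nat \<Rightarrow> nat) \<Rightarrow> bool" where
  "altp g k a \<longleftrightarrow> (\<forall>i<k. a i < a (Suc i)) \<and> (\<forall>i\<le>k. (-1)^i * g (a i) \<ge> 0)"

lemma recs_scale: "recs ms g \<Longrightarrow> recs ms (\<lambda>s. c * g s)"
proof (induction ms arbitrary: g)
  case Nil then show ?case by simp
next
  case (Cons m ms)
  have "recs ms (\<lambda>s. c * (g (Suc s) - m * g s))" using Cons by (simp only: recs.simps)
  moreover have "(\<lambda>s. c * (g (Suc s) - m * g s)) = (\<lambda>s. c * g (Suc s) - m * (c * g s))"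
    by (simp add: algebra_simps)
  ultimately show ?case by (simp only: recs.simps)
qed

lemma recs_D: "recs ms g \<Longrightarrow> recs ms (\<lambda>s. g (Suc s) - m * g s)"
proof (induction ms arbitrary: g)
  case Nil then show ?case by simp
next
  case (Cons m' ms)
  have "recs ms (\<lambda>s. (g (Suc (Suc s)) - m' * g (Suc s)) - m * (g (Suc s) - m' * g s))"
    using Cons.IH[of "\<lambda>s. g (Suc s) - m' * g s"] Cons.prems by (simp only: recs.simps)
  moreover have "(\<lambda>s. (g (Suc (Suc s)) - m' * g (Suc s)) - m * (g (Suc s) - m' * g s))
     = (\<lambda>s. (g (Suc (Suc s)) - m * g (Suc s)) - m' * (g (Suc s) - m * g s))"
    by (simp add: algebra_simps)
  ultimately show ?case by (simp only: recs.simps)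
qed

lemma recs_sq: "recs ls f \<Longrightarrow> recs (map (\<lambda>x. x^2) ls) (\<lambda>s. f (2*s + r))"
proof (induction ls arbitrary: f)
  case Nil then show ?case by simp
next
  case (Cons l ls)
  have "recs ls (\<lambda>s. f (Suc s) - l * f s)" using Cons.prems by (simp only: recs.simps)
  then have "recs ls (\<lambda>s. (f (Suc (Suc s)) - l * f (Suc s)) - (-l) * (f (Suc s) - l * f s))"
    using recs_D by blast
  moreover have "(\<lambda>s. (f (Suc (Suc s)) - l * f (Suc s)) - (-l) * (f (Suc s) - l * f s))
    = (\<lambda>s. f (Suc (Suc s)) - l^2 * f s)" by (simp add: algebra_simps power2_eq_square)
  ultimately have "recs ls (\<lambda>s. f (Suc (Suc s)) - l^2 * f s)" by (simp only:)
  from Cons.IH[OF this]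
  have "recs (map (\<lambda>x. x^2) ls) (\<lambda>s. f (Suc (Suc (2*s + r))) - l^2 * f (2*s+r))" .
  moreover have "(\<lambda>s. f (Suc (Suc (2*s + r))) - l^2 * f (2*s+r)) = (\<lambda>s. f (2 * Suc s + r) - l^2 * f (2*s+r))"
    by simp
  ultimately show ?case by (simp only: list.map recs.simps)
qed

lemma altp_scale: "altp g k a \<Longrightarrow> (\<And>s. c s > 0) \<Longrightarrow> altp (\<lambda>s. c s * g s) k a"
  unfolding altp_def
proof (intro conjI allI impI)
  fix i assume "(\<forall>i<k. a i < a (Suc i)) \<and> (\<forall>i\<le>k. 0 \<le> (- 1) ^ i * g (a i))" "\<And>s. c s > 0" "i \<le> k"
  then have "0 \<le> (- 1) ^ i * g (a i)" "c (a i) > 0" by auto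
  then have "0 \<le> c (a i) * ((- 1) ^ i * g (a i))" by simp
  then show "0 \<le> (- 1) ^ i * (c (a i) * g (a i))" by (simp add: algebra_simps)
qed auto

lemma rolle_step:
  assumes "altp u (Suc k) a"
  shows "\<exists>b. altp (\<lambda>j. -(u (Suc j) - u j)) k b"
proof -
  have ex: "\<exists>j. a i \<le> j \<and> j < a (Suc i) \<and> (-1)^i * (-(u (Suc j) - u j)) \<ge> 0" if i: "i \<le> k" for i
  proof (rule ccontr)
    assume nex: "\<not> ?thesis"
    have neg: "(-1)^i * (u (Suc j) - u j) > 0" if "j \<in> {a i..<a (Suc i)}" for j
    proof -
      have "\<not> (-1)^i * (-(u (Suc j) - u j)) \<ge> 0" using nex that by auto
      then show ?thesis using mult_minus_right[of "(-1::real)^i" "u (Suc j) - u j"] by linarith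
    qed
    have lt: "a i < a (Suc i)" using assms i unfolding altp_def by auto
    have "(\<Sum>j = a i..<a (Suc i). (-1)^i * (u (Suc j) - u j)) > 0"
      by (rule sum_pos) (use lt neg in auto)
    also have "(\<Sum>j = a i..<a (Suc i). (-1)^i * (u (Suc j) - u j)) = (-1)^i * (u (a (Suc i)) - u (a i))"
      using lt by (simp add: sum_distrib_left[symmetric] sum_Suc_diff')
    finally have "(-1)^i * (u (a (Suc i)) - u (a i)) > 0" .
    moreover have "(-1)^i * u (a i) \<ge> 0" "(-1)^(Suc i) * u (a (Suc i)) \<ge> 0"
      using assms i unfolding altp_def by auto
    ultimately show False by (simp add: algebra_simps)
  qed
  define b where "b i = (SOME j. a i \<le> j \<and> j < a (Suc i) \<and> (-1)^i * (-(u (Suc j) - u j)) \<ge> 0)" for i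
  have b: "a i \<le> b i \<and> b i < a (Suc i) \<and> (-1)^i * (-(u (Suc (b i)) - u (b i))) \<ge> 0" if "i \<le> k" for i
    unfolding b_def using someI_ex[OF ex[OF that]] .
  have "altp (\<lambda>j. -(u (Suc j) - u j)) k b"
    unfolding altp_def
  proof (intro conjI allI impI)
    fix i assume "i < k"
    then have "b i < a (Suc i)" "a (Suc i) \<le> b (Suc i)" using b[of i] b[of "Suc i"] by auto
    then show "b i < b (Suc i)" by simp
  next
    fix i assume "i \<le> k" then show "0 \<le> (- 1) ^ i * - (u (Suc (b i)) - u (b i))" using b by auto
  qed
  then show ?thesis by blast
qed

lemma core:
  "(\<forall>m\<in>set ms. m > 0) \<Longrightarrow> recs ms g \<Longrightarrow> altp g (length ms) a \<Longrightarrow> g s = 0"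
proof (induction ms arbitrary: g a s)
  case Nil then show ?case by simp
next
  case (Cons m ms)
  define h where "h = (\<lambda>s. g (Suc s) - m * g s)"
  have m: "m > 0" and pos: "\<forall>m\<in>set ms. m > 0" using Cons.prems by auto
  have rh: "recs ms h" using Cons.prems(2) by (simp only: h_def recs.simps)
  define u where "u = (\<lambda>s. (1 / m^s) * g s)"
  have "altp u (Suc (length ms)) a" unfolding u_def
    by (rule altp_scale) (use Cons.prems m in auto)
  from rolle_step[OF this] obtain b where "altp (\<lambda>j. -(u (Suc j) - u j)) (length ms) b" by blast
  then have "altp (\<lambda>j. m^(Suc j) * (-(u (Suc j) - u j))) (length ms) b"
    by (rule altp_scale) (use m in auto)
  moreover have "(\<lambda>j. m^(Suc j) * (-(u (Suc j) - u j))) = (\<lambda>j. (-1) * h j)"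
  proof (rule ext)
    fix j
    have e1: "m^(Suc j) * u (Suc j) = g (Suc j)" using m by (simp add: u_def)
    have e2: "m^(Suc j) * u j = m * g j" using m by (simp add: u_def field_simps)
    have "m^(Suc j) * (-(u (Suc j) - u j)) = -(m^(Suc j) * u (Suc j) - m^(Suc j) * u j)"
      by (simp add: algebra_simps)
    also have "\<dots> = (-1) * h j" unfolding e1 e2 h_def by simp
    finally show "m^(Suc j) * (-(u (Suc j) - u j)) = (-1) * h j" .
  qed
  ultimately have "altp (\<lambda>j. (-1) * h j) (length ms) b" by (simp only:)
  moreover have "recs ms (\<lambda>j. (-1) * h j)" using recs_scale[OF rh] .
  ultimately have h0: "\<And>s. (-1) * h s = 0" using Cons.IH pos by blast
  have gs: "g s = m^s * g 0" for s
  proof (induction s)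
    case 0 then show ?case by simp
  next
    case (Suc s)
    have "g (Suc s) = m * g s" using h0[of s] by (simp add: h_def)
    then show ?case using Suc.IH by simp
  qed
  have al: "(\<forall>i<Suc (length ms). a i < a (Suc i)) \<and> (\<forall>i\<le>Suc (length ms). (-1)^i * g (a i) \<ge> 0)"
    using Cons.prems(3) unfolding altp_def by simp
  then have p: "\<forall>i\<le>Suc (length ms). (-1)^i * g (a i) \<ge> 0" by blast
  have "(-1::real)^0 * g (a 0) \<ge> 0" "(-1::real)^1 * g (a 1) \<ge> 0"
    using p[rule_format, of 0] p[rule_format, of 1] by auto
  then have "g (a 0) \<ge> 0" "- g (a 1) \<ge> 0" by auto
  then have "m ^ a 0 * g 0 \<ge> 0" "m ^ a 1 * g 0 \<le> 0" using gs[of "a 0"] gs[of "a 1"] by auto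
  moreover have "m ^ a 0 > 0" "m ^ a 1 > 0" using m by auto
  ultimately have "g 0 \<ge> 0" "g 0 \<le> 0" by (auto simp: zero_le_mult_iff mult_le_0_iff)
  then have "g 0 = 0" by simp
  then show ?case using gs[of s] by simp
qed

lemma zeros_bound:
  assumes pos: "\<forall>m\<in>set ms. m > 0" and r: "recs ms g"
    and fin: "finite Z" and card: "card Z \<ge> length ms" and z: "\<And>s. s \<in> Z \<Longrightarrow> g s = 0"
  shows "g s0 = 0"
proof (rule ccontr)
  assume g0: "g s0 \<noteq> 0"
  then have s0: "s0 \<notin> Z" using z by auto
  obtain Z' where Z': "Z' \<subseteq> Z" "card Z' = length ms"
    using obtain_subset_with_card_n[OF card] by blast
  have finZ': "finite Z'" using Z' fin finite_subset by blast
  define S where "S = insert s0 Z'"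
  have finS: "finite S" and cS: "card S = Suc (length ms)"
    using finZ' Z' s0 by (auto simp: S_def card_insert_if)
  define xs where "xs = sorted_list_of_set S"
  have sxs: "sorted_wrt (<) xs" and dxs: "distinct xs" and lxs: "length xs = Suc (length ms)"
    and setxs: "set xs = S"
    using finS cS by (auto simp: xs_def)
  obtain idx where idx: "idx < length xs" "xs ! idx = s0"
    using setxs by (metis S_def insertI1 in_set_conv_nth)
  define \<sigma> where "\<sigma> = (if (-1)^idx * g s0 \<ge> 0 then (1::real) else -1)"
  have "altp (\<lambda>s. \<sigma> * g s) (length ms) (\<lambda>i. xs ! i)"
    unfolding altp_def
  proof (intro conjI allI impI)
    fix i assume "i < length ms"
    then show "xs ! i < xs ! Suc i" using sorted_wrt_nth_less[OF sxs, of i "Suc i"] lxs by auto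
  next
    fix i assume i: "i \<le> length ms"
    show "0 \<le> (- 1) ^ i * (\<sigma> * g (xs ! i))"
    proof (cases "i = idx")
      case True
      then show ?thesis using idx by (auto simp: \<sigma>_def)
    next
      case False
      then have "xs ! i \<noteq> s0" using idx dxs i lxs by (metis le_imp_less_Suc nth_eq_iff_index_eq)
      moreover have "xs ! i \<in> S" using setxs i lxs by (metis le_imp_less_Suc nth_mem)
      ultimately have "xs ! i \<in> Z" using Z' by (auto simp: S_def)
      then show ?thesis using z by simp
    qed
  qed
  moreover have "recs ms (\<lambda>s. \<sigma> * g s)" using recs_scale[OF r] .
  ultimately have "\<sigma> * g s0 = 0" using core[OF pos] by blast
  then show False using g0 by (auto simp: \<sigma>_def split: if_splits)
qed

definition seqm :: "real mat \<Rightarrow> real mat \<Rightarrow> real vec \<Rightarrow> nat \<Rightarrow> real" where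
  "seqm M C w s = (C * M ^\<^sub>m s *\<^sub>v w) $ 0"

lemma smult_one_mat_vec:
  assumes w: "(w :: real vec) \<in> carrier_vec n"
  shows "(\<mu> \<cdot>\<^sub>m 1\<^sub>m n) *\<^sub>v w = \<mu> \<cdot>\<^sub>v w"
proof (rule eq_vecI)
  fix i assume "i < dim_vec (\<mu> \<cdot>\<^sub>v w)"
  then have i: "i < n" using w by simp
  have "row (\<mu> \<cdot>\<^sub>m 1\<^sub>m n) i = \<mu> \<cdot>\<^sub>v unit_vec n i" using i by (auto intro!: eq_vecI)
  then show "((\<mu> \<cdot>\<^sub>m 1\<^sub>m n) *\<^sub>v w) $ i = (\<mu> \<cdot>\<^sub>v w) $ i"
    using i w by (simp add: scalar_prod_left_unit)
qed (use w in simp)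

lemma seqm_step:
  assumes M: "M \<in> carrier_mat n n" and C: "C \<in> carrier_mat 1 n" and w: "w \<in> carrier_vec n"
  shows "seqm M C w (Suc s) - \<mu> * seqm M C w s = seqm M C ((M - \<mu> \<cdot>\<^sub>m 1\<^sub>m n) *\<^sub>v w) s"
proof -
  have Ms: "M ^\<^sub>m s \<in> carrier_mat n n" using M by simp
  have CMs: "C * M ^\<^sub>m s \<in> carrier_mat 1 n" using C Ms by simp
  have e1: "C * M ^\<^sub>m Suc s *\<^sub>v w = (C * M ^\<^sub>m s) *\<^sub>v (M *\<^sub>v w)"
    using M C w Ms by (simp add: assoc_mult_mat[of C 1 n "M ^\<^sub>m s" n M n, symmetric] assoc_mult_mat_vec[of _ 1 n M n w])
  have e2: "(M - \<mu> \<cdot>\<^sub>m 1\<^sub>m n) *\<^sub>v w = M *\<^sub>v w - \<mu> \<cdot>\<^sub>v w"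
    using M w by (simp add: minus_mult_distrib_mat_vec smult_one_mat_vec)
  have e3: "(C * M ^\<^sub>m s) *\<^sub>v (M *\<^sub>v w - \<mu> \<cdot>\<^sub>v w) = (C * M ^\<^sub>m s) *\<^sub>v (M *\<^sub>v w) - \<mu> \<cdot>\<^sub>v ((C * M ^\<^sub>m s) *\<^sub>v w)"
    using CMs M w by (simp add: mult_minus_distrib_mat_vec mult_mat_vec)
  have dr: "dim_row (C * M ^\<^sub>m s) = 1" using C by simp
  show ?thesis unfolding seqm_def e1 e2 e3
    using CMs M w dr by simp
qed

fun appL :: "real mat \<Rightarrow> real list \<Rightarrow> real vec \<Rightarrow> real vec" where
  "appL M [] w = w"
| "appL M (m # ms) w = appL M ms ((M - m \<cdot>\<^sub>m 1\<^sub>m (dim_row M)) *\<^sub>v w)"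

lemma appL_recs:
  assumes M: "M \<in> carrier_mat n n" and C: "C \<in> carrier_mat 1 n"
  shows "w \<in> carrier_vec n \<Longrightarrow> appL M ms w = 0\<^sub>v n \<Longrightarrow> recs ms (seqm M C w)"
proof (induction ms arbitrary: w)
  case Nil
  then have w0: "w = 0\<^sub>v n" by simp
  have "seqm M C w s = 0" for s
  proof -
    have "dim_vec (row (C * M ^\<^sub>m s) 0) = n" using C M by simp
    then have r: "row (C * M ^\<^sub>m s) 0 \<in> carrier_vec n" by (rule carrier_vecI)
    have "seqm M C w s = row (C * M ^\<^sub>m s) 0 \<bullet> w" unfolding seqm_def using C by simp
    also have "\<dots> = 0" unfolding w0 using r by simp
    finally show ?thesis .
  qed
  then show ?case by simp
next
  case (Cons m ms)
  have Mc: "M - m \<cdot>\<^sub>m 1\<^sub>m n \<in> carrier_mat n n" using M by (intro minus_carrier_mat) auto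
  have c1: "(M - m \<cdot>\<^sub>m 1\<^sub>m n) *\<^sub>v w \<in> carrier_vec n" using mult_mat_vec_carrier[OF Mc Cons.prems(1)] .
  have dr: "dim_row M = n" using M by simp
  have c2: "appL M ms ((M - m \<cdot>\<^sub>m 1\<^sub>m n) *\<^sub>v w) = 0\<^sub>v n"
    using Cons.prems(2) by (simp only: appL.simps dr)
  have r1: "recs ms (seqm M C ((M - m \<cdot>\<^sub>m 1\<^sub>m n) *\<^sub>v w))" using Cons.IH[OF c1 c2] .
  have e: "seqm M C ((M - m \<cdot>\<^sub>m 1\<^sub>m n) *\<^sub>v w) = (\<lambda>s. seqm M C w (Suc s) - m * seqm M C w s)"
  proof (rule ext)
    fix s
    show "seqm M C ((M - m \<cdot>\<^sub>m 1\<^sub>m n) *\<^sub>v w) s = seqm M C w (Suc s) - m * seqm M C w s"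
      using seqm_step[OF M C Cons.prems(1), of s m] by (rule sym)
  qed
  show ?case using r1 e by (simp only: recs.simps)
qed

lemma appL_tri:
  assumes T: "T \<in> carrier_mat n n" and ut: "upper_triangular T"
  shows "k \<le> n \<Longrightarrow> w \<in> carrier_vec n \<Longrightarrow> (\<And>j. k \<le> j \<Longrightarrow> j < n \<Longrightarrow> w $ j = 0)
    \<Longrightarrow> appL T (rev (map (\<lambda>i. T $$ (i, i)) [0..<k])) w = 0\<^sub>v n"
proof (induction k arbitrary: w)
  case 0
  then show ?case by (auto intro!: eq_vecI)
next
  case (Suc k)
  define d where "d = T $$ (k, k)"
  define w' where "w' = (T - d \<cdot>\<^sub>m 1\<^sub>m n) *\<^sub>v w"
  have Tc: "T - d \<cdot>\<^sub>m 1\<^sub>m n \<in> carrier_mat n n" using T by (intro minus_carrier_mat) auto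
  have w'c: "w' \<in> carrier_vec n" unfolding w'_def using mult_mat_vec_carrier[OF Tc Suc.prems(2)] .
  have w'0: "w' $ j = 0" if j: "k \<le> j" "j < n" for j
  proof -
    have "w' $ j = row (T - d \<cdot>\<^sub>m 1\<^sub>m n) j \<bullet> w" using T j by (simp add: w'_def)
    also have "\<dots> = (\<Sum>l<n. (T - d \<cdot>\<^sub>m 1\<^sub>m n) $$ (j, l) * w $ l)"
      using T j Suc.prems by (simp add: scalar_prod_def lessThan_atLeast0)
    also have "\<dots> = 0"
    proof (rule sum.neutral, intro ballI)
      fix l assume l: "l \<in> {..<n}"
      show "(T - d \<cdot>\<^sub>m 1\<^sub>m n) $$ (j, l) * w $ l = 0"
      proof (cases "l \<le> k")
        case True
        have e: "(T - d \<cdot>\<^sub>m 1\<^sub>m n) $$ (j, l) = T $$ (j, l) - (if j = l then d else 0)"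
          using T j l by simp
        show ?thesis
        proof (cases "l < j")
          case True
          then have "T $$ (j, l) = 0" using ut T j unfolding upper_triangular_def by auto
          then show ?thesis using e True by simp
        next
          case False
          then have "l = j" "j = k" using \<open>l \<le> k\<close> j by auto
          then show ?thesis using e by (simp add: d_def)
        qed
      next
        case False
        then have "w $ l = 0" using Suc.prems l by auto
        then show ?thesis by simp
      qed
    qed
    finally show ?thesis .
  qed
  have "appL T (rev (map (\<lambda>i. T $$ (i, i)) [0..<k])) w' = 0\<^sub>v n"
    using Suc.IH[OF _ w'c] Suc.prems w'0 by auto
  then show ?case using T by (simp add: w'_def d_def)
qed

interpretation of_real_poly_hom: map_poly_inj_idom_hom "of_real :: real \<Rightarrow> complex" ..

context vec_space
begin

lemma rank_lt_nondistinct: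
  assumes "A \<in> carrier_mat n nc" and "\<not> distinct (cols A)"
  shows "rank A < nc"
proof -
  obtain S where "maximal S (\<lambda>T. T \<subseteq> set (cols A) \<and> lin_indpt T)"
    using maximal_exists[of "(\<lambda>T. T \<subseteq> set (cols A) \<and> lin_indpt T)" "card (set (cols A))" "{}"]
    by (meson List.finite_set card_mono empty_iff empty_subsetI finite_lin_indpt2 rev_finite_subset)
  then have "card S \<le> card (set (cols A))" by (simp add: card_mono maximal_def)
  then have "card S < nc"
    using assms(1) cols_length card_length \<open>\<not> distinct (cols A)\<close> card_distinct carrier_matD(2) nat_less_le
    by (metis dual_order.antisym dual_order.trans)
  then show ?thesis
    using rank_card_indpt[OF assms(1) \<open>maximal S _\<close>] by simp
qed

lemma rank_full_ker:
  fixes v :: "'a vec"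
  assumes A: "A \<in> carrier_mat n nc" and r: "rank A = nc"
    and v: "v \<in> carrier_vec nc" and z: "A *\<^sub>v v = 0\<^sub>v n"
  shows "v = 0\<^sub>v nc"
proof (rule ccontr)
  assume nz: "v \<noteq> 0\<^sub>v nc"
  have d: "distinct (cols A)" using rank_lt_nondistinct[OF A] r by fastforce
  have "lin_indpt (set (cols A))" using full_rank_lin_indpt[OF A r d] .
  moreover have "lin_dep (set (cols A))" using lin_depI[OF A v nz z d] .
  ultimately show False by simp
qed

lemma ker_rank_full:
  fixes A :: "'a mat"
  assumes A: "A \<in> carrier_mat n nc"
    and k: "\<And>v :: 'a vec. v \<in> carrier_vec nc \<Longrightarrow> A *\<^sub>v v = 0\<^sub>v n \<Longrightarrow> v = 0\<^sub>v nc"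
  shows "rank A = nc"
proof -
  have unit: "A *\<^sub>v unit_vec nc i = col A i" if "i < nc" for i
    using A that by (intro eq_vecI) (auto simp: scalar_prod_right_unit)
  have d: "distinct (cols A)"
  proof (rule ccontr)
    assume "\<not> distinct (cols A)"
    then obtain i j where ij: "i < length (cols A)" "j < length (cols A)" "i \<noteq> j" "cols A ! i = cols A ! j"
      by (metis distinct_conv_nth)
    then have ij': "i < nc" "j < nc" "col A i = col A j" using A by auto
    define v :: "'a vec" where "v = unit_vec nc i - unit_vec nc j"
    have vc: "v \<in> carrier_vec nc" by (simp add: v_def)
    have "A *\<^sub>v v = A *\<^sub>v unit_vec nc i - A *\<^sub>v unit_vec nc j"
      unfolding v_def using A by (simp add: mult_minus_distrib_mat_vec)
    also have "\<dots> = 0\<^sub>v n" using unit ij' A by (auto intro!: eq_vecI)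
    finally have "v = 0\<^sub>v nc" using k vc by blast
    moreover have "v $ i = 1" using ij' ij(3) by (simp add: v_def)
    ultimately show False using ij' by simp
  qed
  have "lin_indpt (set (cols A))"
  proof
    assume "lin_dep (set (cols A))"
    from lin_depE[OF A this d] obtain v where "v \<in> carrier_vec nc" "v \<noteq> 0\<^sub>v nc" "A *\<^sub>v v = 0\<^sub>v n" .
    then show False using k by blast
  qed
  then show ?thesis using lin_indpt_full_rank[OF A d] by blast
qed

end

lemma obs_entry:
  assumes M: "M \<in> carrier_mat n n" and C: "C \<in> carrier_mat 1 n" and v: "v \<in> carrier_vec n" and i: "i < l"
  shows "(sample_obs_mat M C l t *\<^sub>v v) $ i = seqm M C v (t i)"
proof -
  have dc: "dim_col M = n" using M by simp
  have "dim_vec (row (C * M ^\<^sub>m t i) 0) = n" using C M by simp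
  then have car: "row (C * M ^\<^sub>m t i) 0 \<in> carrier_vec n" by (rule carrier_vecI)
  have nth: "[row (C * M ^\<^sub>m t i) 0. i \<leftarrow> [0..<l]] ! i = row (C * M ^\<^sub>m t i) 0" using i by simp
  have len: "i < length [row (C * M ^\<^sub>m t i) 0. i \<leftarrow> [0..<l]]" using i by simp
  have "row (sample_obs_mat M C l t) i = row (C * M ^\<^sub>m t i) 0"
    unfolding sample_obs_mat_def dc using mat_of_rows_row[OF len, unfolded nth, OF car] nth by simp
  moreover have "dim_row (sample_obs_mat M C l t) = l" by (simp add: sample_obs_mat_def)
  moreover have "dim_row (C * M ^\<^sub>m t i) = 1" using C by simp
  ultimately show ?thesis using i unfolding seqm_def by (simp only: index_mult_mat_vec)
qed

lemma sample_obs_carrier: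
  assumes M: "M \<in> carrier_mat n n"
  shows "sample_obs_mat M C l t \<in> carrier_mat l n"
  using M unfolding sample_obs_mat_def by auto

lemma pow_double:
  assumes A: "A \<in> carrier_mat n n"
  shows "A ^\<^sub>m (2 * s) = (A ^\<^sub>m 2) ^\<^sub>m s"
proof (induction s)
  case 0 then show ?case by simp
next
  case (Suc s)
  have "A ^\<^sub>m (2 * Suc s) = A ^\<^sub>m (2 * s) * A * A" by (simp add: numeral_2_eq_2)
  also have "\<dots> = A ^\<^sub>m (2 * s) * (A * A)"
    using A by (simp add: assoc_mult_mat[of _ n n A n A n])
  also have "A * A = A ^\<^sub>m 2" using A by (simp add: numeral_2_eq_2)
  finally show ?case using Suc.IH by simp
qed

lemma seqm_Suc:
  assumes M: "M \<in> carrier_mat n n" and C: "C \<in> carrier_mat 1 n" and w: "w \<in> carrier_vec n"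
  shows "seqm M C w (Suc s) = seqm M C (M *\<^sub>v w) s"
proof -
  have Ms: "M ^\<^sub>m s \<in> carrier_mat n n" using M by simp
  have "C * M ^\<^sub>m Suc s *\<^sub>v w = (C * M ^\<^sub>m s) *\<^sub>v (M *\<^sub>v w)"
    using M C w Ms by (simp add: assoc_mult_mat[of C 1 n "M ^\<^sub>m s" n M n, symmetric] assoc_mult_mat_vec[of _ 1 n M n w])
  then show ?thesis by (simp add: seqm_def)
qed

lemma real_factor:
  assumes A: "A \<in> carrier_mat n n"
    and ev: "\<And>\<mu>::complex. eigenvalue (map_mat complex_of_real A) \<mu> \<Longrightarrow> \<mu> \<noteq> 0"
    and er: "\<And>\<mu>::complex. eigenvalue (map_mat complex_of_real A) \<mu> \<Longrightarrow> \<mu> \<in> \<real>"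
  shows "\<exists>ls. char_poly A = (\<Prod>l\<leftarrow>ls. [:- l, 1:]) \<and> length ls = n \<and> (\<forall>l\<in>set ls. l \<noteq> 0)"
proof -
  have Ac: "map_mat complex_of_real A \<in> carrier_mat n n" using A by simp
  obtain as where as: "char_poly (map_mat complex_of_real A) = (\<Prod>a\<leftarrow>as. [:- a, 1:])" "length as = n"
    using char_poly_factorized[OF Ac] by blast
  have root: "eigenvalue (map_mat complex_of_real A) a" if "a \<in> set as" for a
  proof -
    have "poly (\<Prod>a\<leftarrow>as. [:- a, 1:]) a = 0" using that
    proof (induction as)
      case Nil then show ?case by simp
    next
      case (Cons b bs)
      have e: "poly (\<Prod>a\<leftarrow>b # bs. [:- a, 1:]) a = poly [:- b, 1:] a * poly (\<Prod>a\<leftarrow>bs. [:- a, 1:]) a"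
        by (simp only: list.map prod_list.Cons poly_mult)
      show ?case
      proof (cases "a = b")
        case True then show ?thesis unfolding e by simp
      next
        case False then have "a \<in> set bs" using Cons.prems by simp
        then show ?thesis unfolding e using Cons.IH by simp
      qed
    qed
    then have "poly (char_poly (map_mat complex_of_real A)) a = 0" by (simp only: as(1))
    then show ?thesis using eigenvalue_root_char_poly[OF Ac] by (simp only:)
  qed
  define ls where "ls = map Re as"
  have "map_poly complex_of_real (\<Prod>l\<leftarrow>ls. [:- l, 1:]) = (\<Prod>a\<leftarrow>as. [:- a, 1:])"
    unfolding ls_def using root
  proof (induction as)
    case Nil then show ?case by simp
  next
    case (Cons a as)
    have "a \<in> \<real>" using Cons.prems er by auto
    then have "complex_of_real (Re a) = a" by (auto elim!: Reals_cases)
    then have e: "map_poly complex_of_real [:- Re a, 1:] = [:- a, 1:]" by simp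
    have "map_poly complex_of_real (\<Prod>l\<leftarrow>map Re (a # as). [:- l, 1:])
       = map_poly complex_of_real ([:- Re a, 1:] * (\<Prod>l\<leftarrow>map Re as. [:- l, 1:]))" by (simp only: list.map prod_list.Cons)
    also have "\<dots> = [:- a, 1:] * map_poly complex_of_real (\<Prod>l\<leftarrow>map Re as. [:- l, 1:])"
      by (simp only: of_real_poly_hom.hom_mult e)
    also have "\<dots> = [:- a, 1:] * (\<Prod>a\<leftarrow>as. [:- a, 1:])"
    proof -
      have ih: "map_poly complex_of_real (\<Prod>l\<leftarrow>map Re as. [:- l, 1:]) = (\<Prod>a\<leftarrow>as. [:- a, 1:])"
        by (rule Cons.IH) (simp add: Cons.prems)
      show ?thesis by (simp only: ih)
    qed
    also have "\<dots> = (\<Prod>a\<leftarrow>a # as. [:- a, 1:])" by (simp only: list.map prod_list.Cons)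
    finally show ?case .
  qed
  also have "\<dots> = map_poly complex_of_real (char_poly A)"
    using as(1) of_real_hom.char_poly_hom[OF A, where 'a=complex] by metis
  finally have "(\<Prod>l\<leftarrow>ls. [:- l, 1:]) = char_poly A"
    by (simp only: of_real_poly_hom.eq_iff)
  then have "char_poly A = (\<Prod>l\<leftarrow>ls. [:- l, 1:])" by (rule sym)
  moreover have "\<forall>l\<in>set ls. l \<noteq> 0"
  proof
    fix l assume "l \<in> set ls"
    then obtain a where a: "a \<in> set as" "l = Re a" by (auto simp: ls_def)
    then have "a \<in> \<real>" "a \<noteq> 0" using root ev er by auto
    then show "l \<noteq> 0" using a by (auto elim!: Reals_cases)
  qed
  moreover have "length ls = n" using as(2) by (simp add: ls_def)
  ultimately show ?thesis by blast
qed

theorem theorem1: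
  fixes A C :: "real mat" and n :: nat and t :: "nat \<Rightarrow> nat"
  assumes "n \<ge> 1"
    and "A \<in> carrier_mat n n" and "C \<in> carrier_mat 1 n"
    and "observable_pair A C"
    and "\<And>\<mu>::complex. eigenvalue (map_mat complex_of_real A) \<mu> \<Longrightarrow> \<mu> \<noteq> 0"
    and "\<And>\<mu>::complex. eigenvalue (map_mat complex_of_real A) \<mu> \<Longrightarrow> \<mu> \<in> \<real>"
    and "observable_pair (A ^\<^sub>m 2) C"
    and "inj_on t {..<2 * n - 1}"
  shows "mat_rank (sample_obs_mat A C (2 * n - 1) t) = n"
proof -
  note A = assms(2) and C = assms(3) and inj = assms(8)
  obtain ls where ls: "char_poly A = (\<Prod>l\<leftarrow>ls. [:- l, 1:])" "length ls = n" "\<forall>l\<in>set ls. l \<noteq> 0"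
    using real_factor[OF A assms(5) assms(6)] by blast
  obtain T P Q where sd: "schur_decomposition A ls = (T, P, Q)" by (cases "schur_decomposition A ls") auto
  from schur_decomposition[OF A ls(1) sd]
  have sim: "similar_mat_wit A T P Q" and ut: "upper_triangular T" and dT: "diag_mat T = ls" by auto
  have T: "T \<in> carrier_mat n n" and P: "P \<in> carrier_mat n n" and Q: "Q \<in> carrier_mat n n"
    using sim A unfolding similar_mat_wit_def Let_def by auto
  have recA: "recs (rev ls) (seqm A C v)" if v: "v \<in> carrier_vec n" for v
  proof -
    have CP: "C * P \<in> carrier_mat 1 n" using C P by simp
    have Qv: "Q *\<^sub>v v \<in> carrier_vec n" using Q v by simp
    have "seqm A C v = seqm T (C * P) (Q *\<^sub>v v)"
    proof
      fix k
      have Tk: "T ^\<^sub>m k \<in> carrier_mat n n" using T by simp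
      have PT: "P * T ^\<^sub>m k \<in> carrier_mat n n" using P Tk by simp
      have CPT: "C * P * T ^\<^sub>m k \<in> carrier_mat 1 n" using C P Tk by simp
      have "C * A ^\<^sub>m k *\<^sub>v v = C * (P * T ^\<^sub>m k * Q) *\<^sub>v v"
        using similar_mat_wit_pow_id[OF sim, of k] by (simp only:)
      also have "C * (P * T ^\<^sub>m k * Q) = C * (P * T ^\<^sub>m k) * Q"
        by (rule assoc_mult_mat[symmetric, OF C PT Q])
      also have "C * (P * T ^\<^sub>m k) = C * P * T ^\<^sub>m k"
        by (rule assoc_mult_mat[symmetric, OF C P Tk])
      also have "C * P * T ^\<^sub>m k * Q *\<^sub>v v = (C * P) * T ^\<^sub>m k *\<^sub>v (Q *\<^sub>v v)"
        by (rule assoc_mult_mat_vec[OF CPT Q v])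
      finally show "seqm A C v k = seqm T (C * P) (Q *\<^sub>v v) k" by (simp add: seqm_def)
    qed
    moreover have "appL T (rev ls) (Q *\<^sub>v v) = 0\<^sub>v n"
    proof -
      have "rev ls = rev (map (\<lambda>i. T $$ (i, i)) [0..<n])" using dT T by (simp add: diag_mat_def)
      then show ?thesis using appL_tri[OF T ut, of n "Q *\<^sub>v v"] Qv by simp
    qed
    ultimately show ?thesis using appL_recs[OF T CP Qv] by simp
  qed
  define ms where "ms = map (\<lambda>x. x^2) (rev ls)"
  have pos: "\<forall>m\<in>set ms. m > 0" using ls(3) by (auto simp: ms_def)
  have lms: "length ms = n" using ls(2) by (simp add: ms_def)
  have recr: "recs ms (\<lambda>s. seqm A C v (2 * s + r))" if "v \<in> carrier_vec n" for v r
    unfolding ms_def using recs_sq[OF recA[OF that]] .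
  have A2: "A ^\<^sub>m 2 \<in> carrier_mat n n" using A by simp
  have obs2: "v = 0\<^sub>v n" if v: "v \<in> carrier_vec n" and z: "\<And>s. seqm A C v (2 * s) = 0" for v
  proof -
    let ?O = "sample_obs_mat (A ^\<^sub>m 2) C n (\<lambda>k. k)"
    have Oc: "?O \<in> carrier_mat n n" using sample_obs_carrier[OF A2] .
    have d1: "dim_row (A ^\<^sub>m 2) = n" using A by simp
    have d2: "dim_row ?O = n" using Oc by simp
    have r: "vec_space.rank n ?O = n" using assms(7) unfolding observable_pair_def mat_rank_def d1 d2 .
    have "?O *\<^sub>v v = 0\<^sub>v n"
    proof (rule eq_vecI)
      fix i assume "i < dim_vec (0\<^sub>v n :: real vec)"
      then have i: "i < n" by simp
      have "(?O *\<^sub>v v) $ i = seqm (A ^\<^sub>m 2) C v i" using obs_entry[OF A2 C v i] .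
      also have "\<dots> = seqm A C v (2 * i)" by (simp only: seqm_def pow_double[OF A])
      finally show "(?O *\<^sub>v v) $ i = 0\<^sub>v n $ i" using z i by simp
    qed (use Oc in simp)
    then show ?thesis using vec_space.rank_full_ker[OF Oc r v] by simp
  qed
  have injA: "v = 0\<^sub>v n" if v: "v \<in> carrier_vec n" and z: "A *\<^sub>v v = 0\<^sub>v n" for v
  proof (rule ccontr)
    assume "v \<noteq> 0\<^sub>v n"
    then have "eigenvector A v 0" unfolding eigenvector_def using A v z by auto
    then have "eigenvalue A 0" unfolding eigenvalue_def by blast
    from of_real_hom.eigenvalue_hom[OF A this] have "eigenvalue (map_mat complex_of_real A) 0" by simp
    then show False using assms(5) by blast
  qed
  let ?O = "sample_obs_mat A C (2 * n - 1) t"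
  have Oc: "?O \<in> carrier_mat (2 * n - 1) n" using sample_obs_carrier[OF A] .
  have "vec_space.rank (2 * n - 1) ?O = n"
  proof (rule vec_space.ker_rank_full[OF Oc])
    fix v assume v: "v \<in> carrier_vec n" and z: "?O *\<^sub>v v = 0\<^sub>v (2 * n - 1)"
    have f0: "seqm A C v (t i) = 0" if "i < 2 * n - 1" for i
      using obs_entry[OF A C v that, of t] z that by simp
    define Ev where "Ev = {i \<in> {..<2 * n - 1}. even (t i)}"
    define Od where "Od = {i \<in> {..<2 * n - 1}. odd (t i)}"
    have U: "Ev \<union> Od = {..<2 * n - 1}" by (auto simp: Ev_def Od_def)
    have "card (Ev \<union> Od) = card Ev + card Od"
      by (rule card_Un_disjoint) (auto simp: Ev_def Od_def)
    then have "card Ev + card Od = card {..<2 * n - 1}" unfolding U by simp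
    then have "card Ev + card Od = 2 * n - 1" by simp
    then have cases: "card Ev \<ge> n \<or> card Od \<ge> n" using assms(1) by linarith
    have injh: "inj_on (\<lambda>i. t i div 2) X" if "X \<subseteq> {..<2 * n - 1}" "\<forall>i\<in>X. \<forall>j\<in>X. even (t i) = even (t j)" for X
    proof
      fix i j assume ij: "i \<in> X" "j \<in> X" "t i div 2 = t j div 2"
      then have "t i = t j" using that(2)
        by (metis div_mult_mod_eq odd_iff_mod_2_eq_one even_iff_mod_2_eq_zero)
      then show "i = j" using inj ij that(1) by (meson inj_onD subsetD)
    qed
    from cases show "v = 0\<^sub>v n"
    proof
      assume cE: "card Ev \<ge> n"
      let ?Z = "(\<lambda>i. t i div 2) ` Ev"
      have "inj_on (\<lambda>i. t i div 2) Ev" by (rule injh) (auto simp: Ev_def)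
      then have cZ: "card ?Z \<ge> length ms" using cE lms by (simp add: card_image)
      have zz: "seqm A C v (2 * s + 0) = 0" if sZ: "s \<in> ?Z" for s
      proof -
        obtain i where "i \<in> Ev" "s = t i div 2" using sZ by blast
        then have "2 * s + 0 = t i" "i < 2 * n - 1" by (auto simp: Ev_def)
        then show ?thesis using f0 by simp
      qed
      have "\<And>s. seqm A C v (2 * s + 0) = 0"
        using zeros_bound[OF pos recr[OF v] _ cZ zz] by (simp add: Ev_def)
      then show ?thesis using obs2[OF v] by simp
    next
      assume cO: "card Od \<ge> n"
      let ?Z = "(\<lambda>i. t i div 2) ` Od"
      have "inj_on (\<lambda>i. t i div 2) Od" by (rule injh) (auto simp: Od_def)
      then have cZ: "card ?Z \<ge> length ms" using cO lms by (simp add: card_image)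
      have zz: "seqm A C v (2 * s + 1) = 0" if sZ: "s \<in> ?Z" for s
      proof -
        obtain i where "i \<in> Od" "s = t i div 2" using sZ by blast
        then have "2 * s + 1 = t i" "i < 2 * n - 1" by (auto simp: Od_def)
        then show ?thesis using f0 by simp
      qed
      have all: "\<And>s. seqm A C v (2 * s + 1) = 0"
        using zeros_bound[OF pos recr[OF v] _ cZ zz] by (simp add: Od_def)
      have Av: "A *\<^sub>v v \<in> carrier_vec n" using A v by simp
      have "seqm A C (A *\<^sub>v v) (2 * s) = 0" for s
        using all[of s] seqm_Suc[OF A C v, of "2 * s"] by simp
      then have "A *\<^sub>v v = 0\<^sub>v n" using obs2[OF Av] by blast
      then show ?thesis using injA[OF v] by blast
    qed
  qed
  then show ?thesis unfolding mat_rank_def using Oc by simp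
qed

end
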